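(* Let $T$ be a non-empty compact Hausdorff space and $M$ a pseudo MV-algebra. The kernel of a $(C(T),1_T)$-state-morphism $s$ on $M$ is a maximal ideal of $M$ if and only if there is a state-morphism $s_0$ on $M$ such that $s(x)=s_0(x)1_T$ for all $x\in M$. The same statement holds with $C(T)$ replaced by $C_b(T)$, the Riesz space of bounded real-valued functions on $T$.
   Context: $C(T)$ is the Riesz space of continuous real-valued functions on $T$ with pointwise order; $1_T$ is the constant function $1$. Pseudo MV-algebra: an algebra $(M;\oplus,{}^-,{}^\sim,0,1)$, $0\neq1$, satisfying the standard pseudo MV-algebra axioms; equivalently (up to isomorphism) $M=\Gamma(G,u)=[0,u]$ for a unital $\ell$-group $(G,u)$ with $x\oplus y=(x+y)\wedge u$, $x^-=u-x$, $x^\sim=-x+u$. Ideal: nonempty down-set closed under $\oplus$; maximal = maximal among proper ideals. For a unital Riesz space $(R,1_R)$, $\Gamma(R,1_R)$ is the MV-algebra on $[0,1_R]$, and an $(R,1_R)$-state-morphism is a pseudo MV-algebra homomorphism $M\to\Gamma(R,1_R)$; a state-morphism is an $(\mathbb R,1)$-state-morphism. $\mathrm{Ker}(s)=\{x:s(x)=0\}$. *)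

theory Defs
  imports "HOL-Analysis.Analysis"
begin

record 'a pmv =
  pmv_carrier :: "'a set"
  pmv_oplus :: "'a \<Rightarrow> 'a \<Rightarrow> 'a"
  pmv_negl :: "'a \<Rightarrow> 'a"
  pmv_negr :: "'a \<Rightarrow> 'a"
  pmv_zero :: 'a
  pmv_one :: 'a

definition pmv_odot :: "'a pmv \<Rightarrow> 'a \<Rightarrow> 'a \<Rightarrow> 'a" where
  "pmv_odot M x y = pmv_negr M (pmv_oplus M (pmv_negl M x) (pmv_negl M y))"

definition pseudo_mv_algebra :: "'a pmv \<Rightarrow> bool" where
  "pseudo_mv_algebra M \<longleftrightarrow>
     (let A = pmv_carrier M; p = pmv_oplus M; m = pmv_negl M; t = pmv_negr M;
          z = pmv_zero M; u = pmv_one M; d = pmv_odot M in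
      z \<in> A \<and> u \<in> A \<and> z \<noteq> u \<and>
      (\<forall>x\<in>A. \<forall>y\<in>A. p x y \<in> A) \<and> (\<forall>x\<in>A. m x \<in> A) \<and> (\<forall>x\<in>A. t x \<in> A) \<and>
      (\<forall>x\<in>A. \<forall>y\<in>A. \<forall>w\<in>A. p x (p y w) = p (p x y) w) \<and>
      (\<forall>x\<in>A. p x z = x \<and> p z x = x) \<and>
      (\<forall>x\<in>A. p x u = u \<and> p u x = u) \<and>
      t u = z \<and> m u = z \<and>
      (\<forall>x\<in>A. \<forall>y\<in>A. t (p (m x) (m y)) = m (p (t x) (t y))) \<and>
      (\<forall>x\<in>A. \<forall>y\<in>A.
          p x (d (t x) y) = p y (d (t y) x) \<and>
          p y (d (t y) x) = p (d x (m y)) y \<and>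
          p (d x (m y)) y = p (d y (m x)) x) \<and>
      (\<forall>x\<in>A. \<forall>y\<in>A. d x (p (m x) y) = d (p x (t y)) y) \<and>
      (\<forall>x\<in>A. t (m x) = x))"

definition pmv_le :: "'a pmv \<Rightarrow> 'a \<Rightarrow> 'a \<Rightarrow> bool" where
  "pmv_le M x y \<longleftrightarrow> pmv_oplus M (pmv_negl M x) y = pmv_one M"

definition pmv_ideal :: "'a pmv \<Rightarrow> 'a set \<Rightarrow> bool" where
  "pmv_ideal M I \<longleftrightarrow> I \<subseteq> pmv_carrier M \<and> I \<noteq> {} \<and>
     (\<forall>x\<in>I. \<forall>y\<in>pmv_carrier M. pmv_le M y x \<longrightarrow> y \<in> I) \<and>
     (\<forall>x\<in>I. \<forall>y\<in>I. pmv_oplus M x y \<in> I)"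

definition pmv_maximal_ideal :: "'a pmv \<Rightarrow> 'a set \<Rightarrow> bool" where
  "pmv_maximal_ideal M I \<longleftrightarrow> pmv_ideal M I \<and> I \<noteq> pmv_carrier M \<and>
     (\<forall>J. pmv_ideal M J \<and> J \<noteq> pmv_carrier M \<and> I \<subseteq> J \<longrightarrow> J = I)"

definition pmv_hom :: "'a pmv \<Rightarrow> 'b pmv \<Rightarrow> ('a \<Rightarrow> 'b) \<Rightarrow> bool" where
  "pmv_hom M N h \<longleftrightarrow>
     (\<forall>x\<in>pmv_carrier M. h x \<in> pmv_carrier N) \<and>
     (\<forall>x\<in>pmv_carrier M. \<forall>y\<in>pmv_carrier M.
         h (pmv_oplus M x y) = pmv_oplus N (h x) (h y)) \<and>
     (\<forall>x\<in>pmv_carrier M. h (pmv_negl M x) = pmv_negl N (h x)) \<and>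
     (\<forall>x\<in>pmv_carrier M. h (pmv_negr M x) = pmv_negr N (h x)) \<and>
     h (pmv_zero M) = pmv_zero N \<and> h (pmv_one M) = pmv_one N"

definition pmv_kernel :: "'a pmv \<Rightarrow> 'b pmv \<Rightarrow> ('a \<Rightarrow> 'b) \<Rightarrow> 'a set" where
  "pmv_kernel M N s = {x \<in> pmv_carrier M. s x = pmv_zero N}"

definition Gamma_real :: "real pmv" where
  "Gamma_real = \<lparr>pmv_carrier = {0..1}, pmv_oplus = (\<lambda>a b. min (a + b) 1),
     pmv_negl = (\<lambda>a. 1 - a), pmv_negr = (\<lambda>a. 1 - a), pmv_zero = 0, pmv_one = 1\<rparr>"

definition Gamma_C :: "('t::topological_space \<Rightarrow> real) pmv" where
  "Gamma_C = \<lparr>pmv_carrier = {f. continuous_on UNIV f \<and> (\<forall>t. 0 \<le> f t \<and> f t \<le> 1)},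
     pmv_oplus = (\<lambda>f g t. min (f t + g t) 1),
     pmv_negl = (\<lambda>f t. 1 - f t), pmv_negr = (\<lambda>f t. 1 - f t),
     pmv_zero = (\<lambda>t. 0), pmv_one = (\<lambda>t. 1)\<rparr>"

text \<open>\<Gamma>(C_b(T),1_T): all (automatically bounded) functions T \<rightarrow> [0,1].\<close>
definition Gamma_Cb :: "('t \<Rightarrow> real) pmv" where
  "Gamma_Cb = \<lparr>pmv_carrier = {f. \<forall>t. 0 \<le> f t \<and> f t \<le> 1},
     pmv_oplus = (\<lambda>f g t. min (f t + g t) 1),
     pmv_negl = (\<lambda>f t. 1 - f t), pmv_negr = (\<lambda>f t. 1 - f t),
     pmv_zero = (\<lambda>t. 0), pmv_one = (\<lambda>t. 1)\<rparr>"

end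

theory Submission
  imports Defs
begin

lemma pmv_facts:
  assumes "pseudo_mv_algebra M"
  shows "pmv_zero M \<in> pmv_carrier M" "pmv_one M \<in> pmv_carrier M"
    "\<And>x y. x \<in> pmv_carrier M \<Longrightarrow> y \<in> pmv_carrier M \<Longrightarrow> pmv_oplus M x y \<in> pmv_carrier M"
    "\<And>x. x \<in> pmv_carrier M \<Longrightarrow> pmv_negl M x \<in> pmv_carrier M"
    "\<And>x. x \<in> pmv_carrier M \<Longrightarrow> pmv_negr M x \<in> pmv_carrier M"
    "\<And>x. x \<in> pmv_carrier M \<Longrightarrow> pmv_oplus M x (pmv_zero M) = x"
    "\<And>x. x \<in> pmv_carrier M \<Longrightarrow> pmv_oplus M x (pmv_one M) = pmv_one M"
    "\<And>x. x \<in> pmv_carrier M \<Longrightarrow> pmv_oplus M (pmv_one M) x = pmv_one M"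
    "pmv_negl M (pmv_one M) = pmv_zero M"
    "\<And>x. x \<in> pmv_carrier M \<Longrightarrow> pmv_negr M (pmv_negl M x) = x"
    "\<And>x y. x \<in> pmv_carrier M \<Longrightarrow> y \<in> pmv_carrier M \<Longrightarrow>
       pmv_oplus M x (pmv_odot M (pmv_negr M x) y) = pmv_oplus M y (pmv_odot M (pmv_negr M y) x)"
  using assms unfolding pseudo_mv_algebra_def Let_def by auto

lemma pmv_odot_closed:
  assumes "pseudo_mv_algebra M" "x \<in> pmv_carrier M" "y \<in> pmv_carrier M"
  shows "pmv_odot M x y \<in> pmv_carrier M"
  using pmv_facts[OF assms(1)] assms(2,3) unfolding pmv_odot_def by simp

lemma pmv_compl_r:
  assumes "pseudo_mv_algebra M" "x \<in> pmv_carrier M"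
  shows "pmv_oplus M x (pmv_negr M x) = pmv_one M"
proof -
  note F = pmv_facts[OF assms(1)]
  have tx: "pmv_negr M x \<in> pmv_carrier M" using F assms by auto
  have "pmv_odot M (pmv_negr M x) (pmv_one M) = pmv_negr M x"
    unfolding pmv_odot_def using F tx by simp
  moreover have "pmv_odot M (pmv_negr M (pmv_one M)) x \<in> pmv_carrier M"
    using pmv_odot_closed[OF assms(1)] F assms by auto
  ultimately show ?thesis using F(11)[OF assms(2) F(2)] F(8) by simp
qed

lemma hom_real:
  assumes "pmv_hom M Gamma_real s"
  shows "\<And>x. x \<in> pmv_carrier M \<Longrightarrow> 0 \<le> s x \<and> s x \<le> 1"
    "\<And>x y. x \<in> pmv_carrier M \<Longrightarrow> y \<in> pmv_carrier M \<Longrightarrow> s (pmv_oplus M x y) = min (s x + s y) 1"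
    "\<And>x. x \<in> pmv_carrier M \<Longrightarrow> s (pmv_negl M x) = 1 - s x"
    "\<And>x. x \<in> pmv_carrier M \<Longrightarrow> s (pmv_negr M x) = 1 - s x"
    "s (pmv_zero M) = 0" "s (pmv_one M) = 1"
  using assms unfolding pmv_hom_def Gamma_real_def by auto

lemma kernel_real_ideal:
  assumes M: "pseudo_mv_algebra M" and h: "pmv_hom M Gamma_real s"
  shows "pmv_ideal M (pmv_kernel M Gamma_real s)"
    "pmv_one M \<notin> pmv_kernel M Gamma_real s"
proof -
  note F = pmv_facts[OF M] and H = hom_real[OF h]
  show "pmv_one M \<notin> pmv_kernel M Gamma_real s"
    unfolding pmv_kernel_def Gamma_real_def using H by simp
  show "pmv_ideal M (pmv_kernel M Gamma_real s)"
    unfolding pmv_ideal_def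
  proof (intro conjI ballI impI)
    show "pmv_kernel M Gamma_real s \<subseteq> pmv_carrier M" unfolding pmv_kernel_def by auto
    show "pmv_kernel M Gamma_real s \<noteq> {}"
      unfolding pmv_kernel_def Gamma_real_def using H F by auto
  next
    fix x y assume x: "x \<in> pmv_kernel M Gamma_real s" and y: "y \<in> pmv_carrier M"
      and le: "pmv_le M y x"
    have xc: "x \<in> pmv_carrier M" "s x = 0" using x unfolding pmv_kernel_def Gamma_real_def by auto
    have "s (pmv_oplus M (pmv_negl M y) x) = 1" using le H unfolding pmv_le_def by simp
    hence "min (1 - s y + s x) 1 = 1" using H F y xc by simp
    hence "s y = 0" using xc H(1)[OF y] by linarith
    thus "y \<in> pmv_kernel M Gamma_real s" using y unfolding pmv_kernel_def Gamma_real_def by simp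
  next
    fix x y assume x: "x \<in> pmv_kernel M Gamma_real s" and y: "y \<in> pmv_kernel M Gamma_real s"
    thus "pmv_oplus M x y \<in> pmv_kernel M Gamma_real s"
      unfolding pmv_kernel_def Gamma_real_def using H F by auto
  qed
qed

lemma kernel_real_maximal:
  assumes M: "pseudo_mv_algebra M" and h: "pmv_hom M Gamma_real s"
  shows "pmv_maximal_ideal M (pmv_kernel M Gamma_real s)"
proof -
  note F = pmv_facts[OF M] and H = hom_real[OF h]
  let ?K = "pmv_kernel M Gamma_real s"
  have KA: "?K \<noteq> pmv_carrier M" using kernel_real_ideal[OF M h] F by auto
  have "J = ?K" if J: "pmv_ideal M J" "J \<noteq> pmv_carrier M" "?K \<subseteq> J" for J
  proof (rule ccontr)
    assume "J \<noteq> ?K"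
    then obtain x where xJ: "x \<in> J" and xK: "x \<notin> ?K" using J(3) by blast
    have xA: "x \<in> pmv_carrier M" using xJ J(1) unfolding pmv_ideal_def by auto
    have a: "s x > 0" using xK xA H(1)[OF xA] unfolding pmv_kernel_def Gamma_real_def by auto
    define pw where "pw = (\<lambda>n. (pmv_oplus M x ^^ n) x)"
    have pw: "pw n \<in> J \<and> pw n \<in> pmv_carrier M \<and> s (pw n) = min (real (Suc n) * s x) 1" for n
    proof (induction n)
      case 0 then show ?case using xJ xA a H(1)[OF xA] by (simp add: pw_def)
    next
      case (Suc n)
      have e: "pw (Suc n) = pmv_oplus M x (pw n)" by (simp add: pw_def)
      have "pw (Suc n) \<in> J" using e Suc xJ J(1) unfolding pmv_ideal_def by auto
      moreover have "pw (Suc n) \<in> pmv_carrier M" using e Suc xA F by auto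
      moreover have "s (pw (Suc n)) = min (real (Suc (Suc n)) * s x) 1"
        using e Suc xA H(2)[OF xA] a by (auto simp: algebra_simps min_def)
      ultimately show ?case by blast
    qed
    obtain n where n: "1 / s x < real n" using reals_Archimedean2 by blast
    have "1 \<le> real (Suc n) * s x" using n a by (simp add: field_simps)
    hence s1: "s (pw n) = 1" using pw[of n] by simp
    have tA: "pmv_negr M (pw n) \<in> pmv_carrier M" using pw F by auto
    have "pmv_negr M (pw n) \<in> ?K" using tA s1 H(4) pw[of n]
      unfolding pmv_kernel_def Gamma_real_def by simp
    hence "pmv_negr M (pw n) \<in> J" using J by auto
    hence uJ: "pmv_one M \<in> J" using pw[of n] J(1) pmv_compl_r[OF M, of "pw n"]
      unfolding pmv_ideal_def by metis
    have "pmv_carrier M \<subseteq> J"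
    proof
      fix y assume y: "y \<in> pmv_carrier M"
      have "pmv_le M y (pmv_one M)" unfolding pmv_le_def using F y by simp
      thus "y \<in> J" using uJ y J(1) unfolding pmv_ideal_def by blast
    qed
    thus False using J unfolding pmv_ideal_def by auto
  qed
  thus ?thesis unfolding pmv_maximal_ideal_def using kernel_real_ideal[OF M h] KA by blast
qed

lemma hom_real_unique:
  assumes M: "pseudo_mv_algebra M" and h1: "pmv_hom M Gamma_real s1"
    and h2: "pmv_hom M Gamma_real s2"
    and K: "pmv_kernel M Gamma_real s1 = pmv_kernel M Gamma_real s2"
    and x: "x \<in> pmv_carrier M"
  shows "s1 x = s2 x"
proof (rule ccontr)
  assume ne: "s1 x \<noteq> s2 x"
  note F = pmv_facts[OF M] and H1 = hom_real[OF h1] and H2 = hom_real[OF h2]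
  have KK: "s1 y = 0 \<longleftrightarrow> s2 y = 0" if "y \<in> pmv_carrier M" for y
    using K that unfolding pmv_kernel_def Gamma_real_def by (simp add: set_eq_iff) blast
  have dd: "s (pmv_odot M y y) = max (2 * s y - 1) 0" if "pmv_hom M Gamma_real s"
    "y \<in> pmv_carrier M" for s y
  proof -
    note H = hom_real[OF that(1)]
    show ?thesis unfolding pmv_odot_def using H F that(2) by (simp add: min_def max_def)
  qed
  have pp: "s (pmv_oplus M y y) = min (2 * s y) 1" if "pmv_hom M Gamma_real s"
    "y \<in> pmv_carrier M" for s y
    using hom_real[OF that(1)] that(2) by simp
  have step: "\<exists>y'\<in>pmv_carrier M. \<bar>s1 y' - s2 y'\<bar> = 2 * \<bar>s1 y - s2 y\<bar>"
    if y: "y \<in> pmv_carrier M" "s1 y \<noteq> s2 y" for y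
  proof -
    have yy1: "pmv_oplus M y y \<in> pmv_carrier M" using F y by auto
    have yy2: "pmv_odot M y y \<in> pmv_carrier M" using pmv_odot_closed[OF M] y by auto
    consider "s1 y \<le> 1/2" "s2 y \<le> 1/2" | "s1 y \<ge> 1/2" "s2 y \<ge> 1/2"
      | "s1 y < 1/2" "s2 y > 1/2" | "s1 y > 1/2" "s2 y < 1/2" by linarith
    then show ?thesis
    proof cases
      case 1 then show ?thesis using yy1 pp[OF h1 y(1)] pp[OF h2 y(1)] by (intro bexI[of _ "pmv_oplus M y y"]) (auto simp: abs_if)
    next
      case 2 then show ?thesis using yy2 dd[OF h1 y(1)] dd[OF h2 y(1)] by (intro bexI[of _ "pmv_odot M y y"]) (auto simp: abs_if)
    next
      case 3 then show ?thesis using KK[OF yy2] dd[OF h1 y(1)] dd[OF h2 y(1)] by auto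
    next
      case 4 then show ?thesis using KK[OF yy2] dd[OF h1 y(1)] dd[OF h2 y(1)] by auto
    qed
  qed
  let ?d = "\<bar>s1 x - s2 x\<bar>"
  have dpos: "?d > 0" using ne by simp
  have it: "\<exists>y\<in>pmv_carrier M. \<bar>s1 y - s2 y\<bar> = 2 ^ n * ?d" for n
  proof (induction n)
    case 0 then show ?case using x by auto
  next
    case (Suc n)
    then obtain y where y: "y \<in> pmv_carrier M" "\<bar>s1 y - s2 y\<bar> = 2 ^ n * ?d" by blast
    have "s1 y \<noteq> s2 y" using y(2) dpos by auto
    then obtain y' where "y' \<in> pmv_carrier M" "\<bar>s1 y' - s2 y'\<bar> = 2 * \<bar>s1 y - s2 y\<bar>"
      using step y(1) by blast
    then show ?case using y(2) by (metis mult.assoc power_Suc)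
  qed
  obtain n where n: "1 / ?d < 2 ^ n" using real_arch_pow[of 2 "1 / ?d"] by auto
  obtain y where y: "y \<in> pmv_carrier M" "\<bar>s1 y - s2 y\<bar> = 2 ^ n * ?d" using it by blast
  have "\<bar>s1 y - s2 y\<bar> \<le> 1" using H1(1)[OF y(1)] H2(1)[OF y(1)] by auto
  moreover have "1 < 2 ^ n * ?d" using n dpos by (simp add: field_simps)
  ultimately show False using y(2) by simp
qed

lemma main_Cb:
  fixes M :: "'a pmv" and s :: "'a \<Rightarrow> 't \<Rightarrow> real"
  assumes M: "pseudo_mv_algebra M" and h: "pmv_hom M Gamma_Cb s"
  shows "pmv_maximal_ideal M (pmv_kernel M Gamma_Cb s) \<longleftrightarrow>
             (\<exists>s0. pmv_hom M Gamma_real s0 \<and>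
                   (\<forall>x\<in>pmv_carrier M. s x = (\<lambda>t. s0 x)))"
proof -
  have st: "pmv_hom M Gamma_real (\<lambda>x. s x t)" for t
    using h unfolding pmv_hom_def Gamma_Cb_def Gamma_real_def by auto
  have Kt: "pmv_kernel M Gamma_Cb s \<subseteq> pmv_kernel M Gamma_real (\<lambda>x. s x t)" for t
    unfolding pmv_kernel_def Gamma_Cb_def Gamma_real_def by auto
  show ?thesis
  proof
    assume mx: "pmv_maximal_ideal M (pmv_kernel M Gamma_Cb s)"
    have eqK: "pmv_kernel M Gamma_real (\<lambda>x. s x t) = pmv_kernel M Gamma_Cb s" for t
    proof -
      have "pmv_kernel M Gamma_real (\<lambda>x. s x t) \<noteq> pmv_carrier M"
        using kernel_real_ideal(2)[OF M st[of t]] pmv_facts(2)[OF M] by auto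
      thus ?thesis using mx kernel_real_ideal(1)[OF M st[of t]] Kt[of t]
        unfolding pmv_maximal_ideal_def by blast
    qed
    have "s x = (\<lambda>t. s x undefined)" if "x \<in> pmv_carrier M" for x
    proof
      fix t show "s x t = s x undefined"
        using hom_real_unique[OF M st[of t] st[of undefined] _ that] eqK by simp
    qed
    thus "\<exists>s0. pmv_hom M Gamma_real s0 \<and> (\<forall>x\<in>pmv_carrier M. s x = (\<lambda>t. s0 x))"
      using st[of undefined] by blast
  next
    assume "\<exists>s0. pmv_hom M Gamma_real s0 \<and> (\<forall>x\<in>pmv_carrier M. s x = (\<lambda>t. s0 x))"
    then obtain s0 where s0: "pmv_hom M Gamma_real s0" "\<forall>x\<in>pmv_carrier M. s x = (\<lambda>t. s0 x)"
      by blast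
    have "pmv_kernel M Gamma_Cb s = pmv_kernel M Gamma_real s0"
      unfolding pmv_kernel_def Gamma_Cb_def Gamma_real_def using s0(2) by (auto simp: fun_eq_iff)
    thus "pmv_maximal_ideal M (pmv_kernel M Gamma_Cb s)"
      using kernel_real_maximal[OF M s0(1)] by simp
  qed
qed

theorem proposition3p21:
  fixes M :: "'a pmv"
  assumes "pseudo_mv_algebra M"
    and "compact (UNIV :: 't::t2_space set)"
  shows "(\<forall>s :: 'a \<Rightarrow> 't \<Rightarrow> real. pmv_hom M Gamma_C s \<longrightarrow>
            (pmv_maximal_ideal M (pmv_kernel M Gamma_C s) \<longleftrightarrow>
             (\<exists>s0. pmv_hom M Gamma_real s0 \<and>
                   (\<forall>x\<in>pmv_carrier M. s x = (\<lambda>t. s0 x)))))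
       \<and> (\<forall>s :: 'a \<Rightarrow> 't \<Rightarrow> real. pmv_hom M Gamma_Cb s \<longrightarrow>
            (pmv_maximal_ideal M (pmv_kernel M Gamma_Cb s) \<longleftrightarrow>
             (\<exists>s0. pmv_hom M Gamma_real s0 \<and>
                   (\<forall>x\<in>pmv_carrier M. s x = (\<lambda>t. s0 x)))))"
proof (intro conjI allI impI)
  fix s :: "'a \<Rightarrow> 't \<Rightarrow> real"
  assume h: "pmv_hom M Gamma_C s"
  have hb: "pmv_hom M Gamma_Cb s"
    using h unfolding pmv_hom_def Gamma_C_def Gamma_Cb_def by auto
  have "pmv_kernel M Gamma_C s = pmv_kernel M Gamma_Cb s"
    unfolding pmv_kernel_def Gamma_C_def Gamma_Cb_def by simp
  thus "pmv_maximal_ideal M (pmv_kernel M Gamma_C s) \<longleftrightarrow>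
             (\<exists>s0. pmv_hom M Gamma_real s0 \<and> (\<forall>x\<in>pmv_carrier M. s x = (\<lambda>t. s0 x)))"
    using main_Cb[OF assms(1) hb] by simp
next
  fix s :: "'a \<Rightarrow> 't \<Rightarrow> real"
  assume h: "pmv_hom M Gamma_Cb s"
  show "pmv_maximal_ideal M (pmv_kernel M Gamma_Cb s) \<longleftrightarrow>
             (\<exists>s0. pmv_hom M Gamma_real s0 \<and> (\<forall>x\<in>pmv_carrier M. s x = (\<lambda>t. s0 x)))"
    using main_Cb[OF assms(1) h] .
qed

end
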